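(* Let $\mathcal{X},\mathcal{Y}$ be stationary finite Markov chains and $C:{\bm X}\times{\bm Y}\to\mathbb{R}_+$ a cost function. Then $$d_{\mathrm{OTC}}(\mathcal{X},\mathcal{Y};C)=\lim_{\delta\to0}d^{\delta,(\infty)}_{\mathrm{WL}}(\mathcal{X},\mathcal{Y};C),\quad\text{and hence}\quad d_{\mathrm{OTC}}(\mathcal{X},\mathcal{Y};C)=\lim_{\delta\to0}\lim_{k\to\infty}d^{\delta,(k)}_{\mathrm{WL}}(\mathcal{X},\mathcal{Y};C).$$
   Context: A finite Markov chain $\mathcal{X}=({\bm X},m^{\bm X}_\bullet,\nu^{\bm X})$ consists of a finite set ${\bm X}$, a transition kernel $m^{\bm X}_\bullet:{\bm X}\to\mathcal{P}({\bm X})$ and an initial distribution $\nu^{\bm X}$; it is stationary if $\nu^{\bm X}$ is stationary for $m^{\bm X}_\bullet$. $\mathcal{C}(\alpha,\beta)$ denotes the set of couplings. A Markovian coupling between $\mathcal{X}$ and $\mathcal{Y}$ is a (possibly time-inhomogeneous) Markov chain $(X_t,Y_t)_{t\in\mathbb{N}}$ on ${\bm X}\times{\bm Y}$ with $\mathrm{law}(X_0,Y_0)\in\mathcal{C}(\nu^{\bm X},\nu^{\bm Y})$ and, for all $t,x,y$, the conditional law of $(X_{t+1},Y_{t+1})$ given $(X_t,Y_t)=(x,y)$ in $\mathcal{C}(m^{\bm X}_x,m^{\bm Y}_y)$; it is time homogeneous if these laws do not depend on $t$. $\Pi(\mathcal{X},\mathcal{Y})$ is the set of Markovian couplings. $d_{\mathrm{OTC}}(\mathcal{X},\mathcal{Y};C)=\inf\mathbb{E}\,C(X_0,Y_0)$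 over time homogeneous Markovian couplings whose initial distribution is stationary for the coupled chain. For $\delta\in(0,1]$: $d^{\delta,(k)}_{\mathrm{WL}}(\mathcal{X},\mathcal{Y};C)=\inf_{\Pi(\mathcal{X},\mathcal{Y})}\mathbb{E}\big[\sum_{t=0}^{k-1}\delta(1-\delta)^tC(X_t,Y_t)+(1-\delta)^kC(X_k,Y_k)\big]$ for $k\in\mathbb{N}$ and $d^{\delta,(\infty)}_{\mathrm{WL}}(\mathcal{X},\mathcal{Y};C)=\inf_{\Pi(\mathcal{X},\mathcal{Y})}\mathbb{E}\big[\sum_{t=0}^{\infty}\delta(1-\delta)^tC(X_t,Y_t)\big]$. *)

theory Defs
  imports "HOL-Probability.Probability"
begin

text \<open>A finite Markov chain on a finite type 'a is given by a transition kernel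
  m :: 'a \<Rightarrow> 'a pmf and an initial distribution \<nu> :: 'a pmf.\<close>

definition stationary :: "('a \<Rightarrow> 'a pmf) \<Rightarrow> 'a pmf \<Rightarrow> bool" where
  "stationary m \<nu> \<longleftrightarrow> bind_pmf \<nu> m = \<nu>"

definition couplings :: "'a pmf \<Rightarrow> 'b pmf \<Rightarrow> ('a \<times> 'b) pmf set" where
  "couplings \<alpha> \<beta> = {\<pi>. map_pmf fst \<pi> = \<alpha> \<and> map_pmf snd \<pi> = \<beta>}"

definition markov_couplings ::
  "('a \<Rightarrow> 'a pmf) \<Rightarrow> 'a pmf \<Rightarrow> ('b \<Rightarrow> 'b pmf) \<Rightarrow> 'b pmf
   \<Rightarrow> (('a \<times> 'b) pmf \<times> (nat \<Rightarrow> 'a \<times> 'b \<Rightarrow> ('a \<times> 'b) pmf)) set" where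
  "markov_couplings mX \<nu>X mY \<nu>Y =
     {(\<pi>0, K). \<pi>0 \<in> couplings \<nu>X \<nu>Y \<and>
        (\<forall>t x y. K t (x, y) \<in> couplings (mX x) (mY y))}"

text \<open>Law of (X_t, Y_t).\<close>
primrec coupled_law ::
  "('a \<times> 'b) pmf \<Rightarrow> (nat \<Rightarrow> 'a \<times> 'b \<Rightarrow> ('a \<times> 'b) pmf) \<Rightarrow> nat \<Rightarrow> ('a \<times> 'b) pmf" where
  "coupled_law \<pi>0 K 0 = \<pi>0"
| "coupled_law \<pi>0 K (Suc t) = bind_pmf (coupled_law \<pi>0 K t) (K t)"

definition exp_cost :: "('a \<Rightarrow> 'b \<Rightarrow> real) \<Rightarrow> ('a \<times> 'b) pmf \<Rightarrow> real" where
  "exp_cost C p = measure_pmf.expectation p (\<lambda>(x, y). C x y)"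

definition d_OTC ::
  "('a \<Rightarrow> 'a pmf) \<Rightarrow> 'a pmf \<Rightarrow> ('b \<Rightarrow> 'b pmf) \<Rightarrow> 'b pmf \<Rightarrow> ('a \<Rightarrow> 'b \<Rightarrow> real) \<Rightarrow> real" where
  "d_OTC mX \<nu>X mY \<nu>Y C =
     Inf {exp_cost C \<pi>0 | \<pi>0 K.
            \<pi>0 \<in> couplings \<nu>X \<nu>Y \<and>
            (\<forall>x y. K (x, y) \<in> couplings (mX x) (mY y)) \<and>
            bind_pmf \<pi>0 K = \<pi>0}"

definition d_WL_k ::
  "real \<Rightarrow> nat \<Rightarrow> ('a \<Rightarrow> 'a pmf) \<Rightarrow> 'a pmf \<Rightarrow> ('b \<Rightarrow> 'b pmf) \<Rightarrow> 'b pmf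
   \<Rightarrow> ('a \<Rightarrow> 'b \<Rightarrow> real) \<Rightarrow> real" where
  "d_WL_k \<delta> k mX \<nu>X mY \<nu>Y C =
     Inf {(\<Sum>t<k. \<delta> * (1 - \<delta>) ^ t * exp_cost C (coupled_law \<pi>0 K t))
            + (1 - \<delta>) ^ k * exp_cost C (coupled_law \<pi>0 K k) | \<pi>0 K.
          (\<pi>0, K) \<in> markov_couplings mX \<nu>X mY \<nu>Y}"

definition d_WL_inf ::
  "real \<Rightarrow> ('a \<Rightarrow> 'a pmf) \<Rightarrow> 'a pmf \<Rightarrow> ('b \<Rightarrow> 'b pmf) \<Rightarrow> 'b pmf
   \<Rightarrow> ('a \<Rightarrow> 'b \<Rightarrow> real) \<Rightarrow> real" where
  "d_WL_inf \<delta> mX \<nu>X mY \<nu>Y C =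
     Inf {(\<Sum>t. \<delta> * (1 - \<delta>) ^ t * exp_cost C (coupled_law \<pi>0 K t)) | \<pi>0 K.
          (\<pi>0, K) \<in> markov_couplings mX \<nu>X mY \<nu>Y}"

end

theory Submission
  imports Defs
begin


lemma pmf_embed_fin:
  fixes f :: "'a::finite \<Rightarrow> real"
  assumes "\<And>x. 0 \<le> f x" "sum f UNIV = 1"
  shows "pmf (embed_pmf f) x = f x"
proof -
  have "(\<integral>\<^sup>+x. ennreal (f x) \<partial>count_space UNIV) = 1"
    using assms by (simp add: nn_integral_count_space_finite sum_ennreal)
  then show ?thesis using pmf_embed_pmf[of f] assms(1) by blast
qed

lemma pmf_map_fin:
  fixes p :: "'a::finite pmf"
  shows "pmf (map_pmf f p) x = (\<Sum>z\<in>f -` {x}. pmf p z)"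
  by (simp add: pmf_map measure_measure_pmf_finite)

lemma expect_fin:
  fixes p :: "'a::finite pmf" and g :: "'a \<Rightarrow> real"
  shows "measure_pmf.expectation p g = (\<Sum>z\<in>UNIV. pmf p z * g z)"
  by (subst integral_measure_pmf[of UNIV]) auto

lemma exp_cost_fin:
  fixes p :: "('x::finite \<times> 'y::finite) pmf"
  shows "exp_cost C p = (\<Sum>z\<in>UNIV. pmf p z * C (fst z) (snd z))"
  unfolding exp_cost_def expect_fin by (simp add: case_prod_beta)

lemma w_sums:
  fixes \<delta> :: real assumes "0 < \<delta>" "\<delta> \<le> 1"
  shows "(\<lambda>t. \<delta> * (1 - \<delta>) ^ t) sums 1"
proof -
  have "(\<lambda>t. (1 - \<delta>) ^ t) sums (1 / (1 - (1 - \<delta>)))"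
    by (rule geometric_sums) (use assms in auto)
  from sums_mult[OF this, of \<delta>] show ?thesis using assms by simp
qed

lemma wsum:
  fixes \<delta> :: real assumes "0 < \<delta>" "\<delta> \<le> 1" "\<And>t. 0 \<le> a t" "\<And>t. a t \<le> B"
  shows "summable (\<lambda>t. \<delta> * (1 - \<delta>) ^ t * a t)"
    "0 \<le> (\<Sum>t. \<delta> * (1 - \<delta>) ^ t * a t)"
    "(\<Sum>t. \<delta> * (1 - \<delta>) ^ t * a t) \<le> B"
proof -
  have ws: "(\<lambda>t. \<delta> * (1 - \<delta>) ^ t) sums 1" using w_sums assms by auto
  have wB: "(\<lambda>t. \<delta> * (1 - \<delta>) ^ t * B) sums B" using sums_mult2[OF ws, of B] by simp
  have nn: "\<And>t. 0 \<le> \<delta> * (1 - \<delta>) ^ t" using assms by auto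
  show s: "summable (\<lambda>t. \<delta> * (1 - \<delta>) ^ t * a t)"
    apply (rule summable_comparison_test[OF _ sums_summable[OF wB]])
    using nn assms by (auto intro!: exI[of _ 0] mult_left_mono)
  show "0 \<le> (\<Sum>t. \<delta> * (1 - \<delta>) ^ t * a t)"
    using nn assms by (intro suminf_nonneg[OF s]) auto
  have "(\<Sum>t. \<delta> * (1 - \<delta>) ^ t * a t) \<le> (\<Sum>t. \<delta> * (1 - \<delta>) ^ t * B)"
    using nn assms by (intro suminf_le[OF _ s sums_summable[OF wB]] mult_left_mono) auto
  then show "(\<Sum>t. \<delta> * (1 - \<delta>) ^ t * a t) \<le> B" using sums_unique[OF wB] by simp
qed



context
  fixes mX :: "'x::finite \<Rightarrow> 'x pmf" and \<nu>X :: "'x pmf"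
    and mY :: "'y::finite \<Rightarrow> 'y pmf" and \<nu>Y :: "'y pmf"
  assumes stX: "stationary mX \<nu>X" and stY: "stationary mY \<nu>Y"
begin

lemma law_coupling:
  assumes "(\<pi>0, K) \<in> markov_couplings mX \<nu>X mY \<nu>Y"
  shows "coupled_law \<pi>0 K t \<in> couplings \<nu>X \<nu>Y"
proof (induction t)
  case 0 then show ?case using assms by (simp add: markov_couplings_def)
next
  case (Suc t)
  have K: "\<And>z. map_pmf fst (K t z) = mX (fst z) \<and> map_pmf snd (K t z) = mY (snd z)"
    using assms by (auto simp: markov_couplings_def couplings_def)
  have "map_pmf fst (coupled_law \<pi>0 K (Suc t)) = bind_pmf (coupled_law \<pi>0 K t) (\<lambda>z. mX (fst z))"
    by (simp add: map_bind_pmf K)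
  also have "\<dots> = bind_pmf (map_pmf fst (coupled_law \<pi>0 K t)) mX" by (simp add: bind_map_pmf)
  also have "\<dots> = \<nu>X" using Suc stX by (simp add: couplings_def stationary_def)
  finally have 1: "map_pmf fst (coupled_law \<pi>0 K (Suc t)) = \<nu>X" .
  have "map_pmf snd (coupled_law \<pi>0 K (Suc t)) = bind_pmf (coupled_law \<pi>0 K t) (\<lambda>z. mY (snd z))"
    by (simp add: map_bind_pmf K)
  also have "\<dots> = bind_pmf (map_pmf snd (coupled_law \<pi>0 K t)) mY" by (simp add: bind_map_pmf)
  also have "\<dots> = \<nu>Y" using Suc stY by (simp add: couplings_def stationary_def)
  finally show ?case using 1 by (simp add: couplings_def)
qed

end

lemma law_step:
  fixes \<pi>0 :: "('x::finite \<times> 'y::finite) pmf"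
  shows "pmf (coupled_law \<pi>0 K (Suc t)) w = (\<Sum>z\<in>UNIV. pmf (coupled_law \<pi>0 K t) z * pmf (K t z) w)"
  by (simp add: pmf_bind expect_fin)

lemma Kmarg:
  fixes K :: "nat \<Rightarrow> ('x::finite \<times> 'y::finite) \<Rightarrow> ('x \<times> 'y) pmf"
  assumes "(\<pi>0, K) \<in> markov_couplings mX \<nu>X mY \<nu>Y"
  shows "(\<Sum>w\<in>fst -` {a}. pmf (K t z) w) = pmf (mX (fst z)) a"
    "(\<Sum>w\<in>snd -` {b}. pmf (K t z) w) = pmf (mY (snd z)) b"
proof -
  have K: "map_pmf fst (K t z) = mX (fst z) \<and> map_pmf snd (K t z) = mY (snd z)"
    using assms by (cases z) (auto simp: markov_couplings_def couplings_def)
  show "(\<Sum>w\<in>fst -` {a}. pmf (K t z) w) = pmf (mX (fst z)) a"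
    using K pmf_map_fin[of fst "K t z" a] by simp
  show "(\<Sum>w\<in>snd -` {b}. pmf (K t z) w) = pmf (mY (snd z)) b"
    using K pmf_map_fin[of snd "K t z" b] by simp
qed



definition muF :: "real \<Rightarrow> (('a \<times> 'b) pmf) \<Rightarrow> (nat \<Rightarrow> 'a \<times> 'b \<Rightarrow> ('a \<times> 'b) pmf) \<Rightarrow> 'a \<times> 'b \<Rightarrow> real" where
  "muF \<delta> \<pi>0 K z = (\<Sum>t. \<delta> * (1 - \<delta>) ^ t * pmf (coupled_law \<pi>0 K t) z)"

definition GF :: "real \<Rightarrow> (('a \<times> 'b) pmf) \<Rightarrow> (nat \<Rightarrow> 'a \<times> 'b \<Rightarrow> ('a \<times> 'b) pmf) \<Rightarrow> 'a \<times> 'b \<Rightarrow> 'a \<times> 'b \<Rightarrow> real" where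
  "GF \<delta> \<pi>0 K z w = (\<Sum>t. \<delta> * (1 - \<delta>) ^ t * (pmf (coupled_law \<pi>0 K t) z * pmf (K t z) w))"

lemma pmf_le1: "pmf p x \<le> 1" by (rule pmf_le_1)

lemma summ1:
  fixes \<delta> :: real assumes "0 < \<delta>" "\<delta> \<le> 1" "\<And>t. 0 \<le> a t" "\<And>t. a t \<le> 1"
  shows "summable (\<lambda>t. \<delta> * (1 - \<delta>) ^ t * a t)"
  using wsum(1)[OF assms] .

lemma prod_le1: "0 \<le> (a::real) \<Longrightarrow> a \<le> 1 \<Longrightarrow> 0 \<le> b \<Longrightarrow> b \<le> 1 \<Longrightarrow> a * b \<le> 1"
  by (simp add: mult_le_one)

context
  fixes \<delta> :: real and \<pi>0 :: "('x::finite \<times> 'y::finite) pmf" and K :: "nat \<Rightarrow> 'x \<times> 'y \<Rightarrow> ('x \<times> 'y) pmf"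
  assumes d0: "0 < \<delta>" and d1: "\<delta> \<le> 1"
begin

lemma summG: "summable (\<lambda>t. \<delta> * (1 - \<delta>) ^ t * (pmf (coupled_law \<pi>0 K t) z * pmf (K t z) w))"
  by (rule summ1[OF d0 d1]) (auto intro: prod_le1 pmf_le_1)

lemma summMu: "summable (\<lambda>t. \<delta> * (1 - \<delta>) ^ t * pmf (coupled_law \<pi>0 K t) z)"
  by (rule summ1[OF d0 d1]) (auto intro: pmf_le_1)

lemma G_bounds: "0 \<le> GF \<delta> \<pi>0 K z w" "GF \<delta> \<pi>0 K z w \<le> 1"
  unfolding GF_def by (rule wsum[OF d0 d1]; auto intro: prod_le1 pmf_le_1)+

lemma mu_bounds: "0 \<le> muF \<delta> \<pi>0 K z" "muF \<delta> \<pi>0 K z \<le> 1"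
  unfolding muF_def by (rule wsum[OF d0 d1]; auto intro: pmf_le_1)+

lemma sumG: "(\<Sum>w\<in>A. GF \<delta> \<pi>0 K z w) =
   (\<Sum>t. \<delta> * (1 - \<delta>) ^ t * pmf (coupled_law \<pi>0 K t) z * (\<Sum>w\<in>A. pmf (K t z) w))"
proof -
  have "(\<Sum>w\<in>A. GF \<delta> \<pi>0 K z w) = (\<Sum>t. \<Sum>w\<in>A. \<delta> * (1 - \<delta>) ^ t * (pmf (coupled_law \<pi>0 K t) z * pmf (K t z) w))"
    unfolding GF_def by (rule suminf_sum[symmetric]) (rule summG)
  also have "\<dots> = (\<Sum>t. \<delta> * (1 - \<delta>) ^ t * pmf (coupled_law \<pi>0 K t) z * (\<Sum>w\<in>A. pmf (K t z) w))"
    by (simp add: sum_distrib_left mult.assoc)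
  finally show ?thesis .
qed

lemma G_row: "(\<Sum>w\<in>UNIV. GF \<delta> \<pi>0 K z w) = muF \<delta> \<pi>0 K z"
  unfolding sumG muF_def by (simp add: sum_pmf_eq_1)

lemma sumMu: "(\<Sum>z\<in>A. muF \<delta> \<pi>0 K z) =
   (\<Sum>t. \<delta> * (1 - \<delta>) ^ t * (\<Sum>z\<in>A. pmf (coupled_law \<pi>0 K t) z))"
proof -
  have "(\<Sum>z\<in>A. muF \<delta> \<pi>0 K z) = (\<Sum>t. \<Sum>z\<in>A. \<delta> * (1 - \<delta>) ^ t * pmf (coupled_law \<pi>0 K t) z)"
    unfolding muF_def by (rule suminf_sum[symmetric]) (rule summMu)
  also have "\<dots> = (\<Sum>t. \<delta> * (1 - \<delta>) ^ t * (\<Sum>z\<in>A. pmf (coupled_law \<pi>0 K t) z))"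
    by (simp add: sum_distrib_left)
  finally show ?thesis .
qed

lemma wconst: "(\<Sum>t. \<delta> * (1 - \<delta>) ^ t * c) = c"
  using sums_unique[OF sums_mult2[OF w_sums[OF d0 d1], of c]] by simp

lemma mu_tot: "(\<Sum>z\<in>UNIV. muF \<delta> \<pi>0 K z) = 1"
  unfolding sumMu using wconst[of 1] by (simp add: sum_pmf_eq_1)

lemma obj_eq:
  "(\<Sum>t. \<delta> * (1 - \<delta>) ^ t * exp_cost C (coupled_law \<pi>0 K t)) =
   (\<Sum>z\<in>UNIV. muF \<delta> \<pi>0 K z * C (fst z) (snd z))"
proof -
  have "(\<Sum>z\<in>UNIV. muF \<delta> \<pi>0 K z * C (fst z) (snd z)) =
     (\<Sum>z\<in>UNIV. \<Sum>t. \<delta> * (1 - \<delta>) ^ t * pmf (coupled_law \<pi>0 K t) z * C (fst z) (snd z))"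
    unfolding muF_def using suminf_mult2[OF summMu] by simp
  also have "\<dots> = (\<Sum>t. \<Sum>z\<in>UNIV. \<delta> * (1 - \<delta>) ^ t * pmf (coupled_law \<pi>0 K t) z * C (fst z) (snd z))"
    by (rule suminf_sum[symmetric]) (intro summable_mult2 summMu)
  also have "\<dots> = (\<Sum>t. \<delta> * (1 - \<delta>) ^ t * exp_cost C (coupled_law \<pi>0 K t))"
    by (simp add: exp_cost_fin sum_distrib_left mult.assoc)
  finally show ?thesis by simp
qed

lemma G_col: "\<bar>(\<Sum>z\<in>UNIV. GF \<delta> \<pi>0 K z w) - muF \<delta> \<pi>0 K w\<bar> \<le> \<delta>"
proof -
  define S where "S = (\<Sum>t. \<delta> * (1 - \<delta>) ^ t * pmf (coupled_law \<pi>0 K (Suc t)) w)"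
  have sS: "summable (\<lambda>t. \<delta> * (1 - \<delta>) ^ t * pmf (coupled_law \<pi>0 K (Suc t)) w)"
    by (rule summ1[OF d0 d1]) (auto intro: pmf_le_1)
  have S01: "0 \<le> S" "S \<le> 1" unfolding S_def by (rule wsum[OF d0 d1]; auto intro: pmf_le_1)+
  have "(\<Sum>z\<in>UNIV. GF \<delta> \<pi>0 K z w) =
     (\<Sum>t. \<Sum>z\<in>UNIV. \<delta> * (1 - \<delta>) ^ t * (pmf (coupled_law \<pi>0 K t) z * pmf (K t z) w))"
    unfolding GF_def by (rule suminf_sum[symmetric]) (rule summG)
  also have "\<dots> = S" unfolding S_def law_step by (simp add: sum_distrib_left)
  finally have 1: "(\<Sum>z\<in>UNIV. GF \<delta> \<pi>0 K z w) = S" .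
  have "(\<Sum>t. \<delta> * (1 - \<delta>) ^ Suc t * pmf (coupled_law \<pi>0 K (Suc t)) w) =
     muF \<delta> \<pi>0 K w - \<delta> * (1 - \<delta>) ^ 0 * pmf (coupled_law \<pi>0 K 0) w"
    unfolding muF_def by (rule suminf_split_head[OF summMu])
  moreover have "(\<Sum>t. \<delta> * (1 - \<delta>) ^ Suc t * pmf (coupled_law \<pi>0 K (Suc t)) w) = (1 - \<delta>) * S"
    unfolding S_def using suminf_mult[OF sS, of "1 - \<delta>"] by (simp add: algebra_simps)
  ultimately have 2: "muF \<delta> \<pi>0 K w = \<delta> * pmf \<pi>0 w + (1 - \<delta>) * S" by simp
  have "S - (\<delta> * pmf \<pi>0 w + (1 - \<delta>) * S) = \<delta> * (S - pmf \<pi>0 w)"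
    by (simp add: algebra_simps)
  then have "\<bar>S - (\<delta> * pmf \<pi>0 w + (1 - \<delta>) * S)\<bar> = \<delta> * \<bar>S - pmf \<pi>0 w\<bar>"
    using d0 by (simp add: abs_mult)
  also have "\<dots> \<le> \<delta> * 1"
  proof (rule mult_left_mono)
    have "0 \<le> pmf \<pi>0 w" "pmf \<pi>0 w \<le> 1" by (auto intro: pmf_le_1)
    then show "\<bar>S - pmf \<pi>0 w\<bar> \<le> 1" using S01 unfolding abs_le_iff by linarith
  qed (use d0 in auto)
  finally show ?thesis using 1 2 by simp
qed

end

context
  fixes mX :: "'x::finite \<Rightarrow> 'x pmf" and \<nu>X :: "'x pmf"
    and mY :: "'y::finite \<Rightarrow> 'y pmf" and \<nu>Y :: "'y pmf"
  assumes stX: "stationary mX \<nu>X" and stY: "stationary mY \<nu>Y"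
begin

lemma mu_marg:
  assumes "(\<pi>0, K) \<in> markov_couplings mX \<nu>X mY \<nu>Y" "0 < \<delta>" "\<delta> \<le> 1"
  shows "(\<Sum>z\<in>fst -` {a}. muF \<delta> \<pi>0 K z) = pmf \<nu>X a"
    "(\<Sum>z\<in>snd -` {b}. muF \<delta> \<pi>0 K z) = pmf \<nu>Y b"
proof -
  have L: "\<And>t. map_pmf fst (coupled_law \<pi>0 K t) = \<nu>X \<and> map_pmf snd (coupled_law \<pi>0 K t) = \<nu>Y"
    using law_coupling[OF stX stY assms(1)] by (auto simp: couplings_def)
  have "\<And>t. (\<Sum>z\<in>fst -` {a}. pmf (coupled_law \<pi>0 K t) z) = pmf \<nu>X a"
    using L pmf_map_fin by metis
  then show "(\<Sum>z\<in>fst -` {a}. muF \<delta> \<pi>0 K z) = pmf \<nu>X a"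
    by (simp add: sumMu[OF assms(2,3)] wconst[OF assms(2,3)])
  have "\<And>t. (\<Sum>z\<in>snd -` {b}. pmf (coupled_law \<pi>0 K t) z) = pmf \<nu>Y b"
    using L pmf_map_fin by metis
  then show "(\<Sum>z\<in>snd -` {b}. muF \<delta> \<pi>0 K z) = pmf \<nu>Y b"
    by (simp add: sumMu[OF assms(2,3)] wconst[OF assms(2,3)])
qed

end

lemma G_marg:
  fixes K :: "nat \<Rightarrow> ('x::finite \<times> 'y::finite) \<Rightarrow> ('x \<times> 'y) pmf"
  assumes "(\<pi>0, K) \<in> markov_couplings mX \<nu>X mY \<nu>Y" "0 < \<delta>" "\<delta> \<le> 1"
  shows "(\<Sum>w\<in>fst -` {a}. GF \<delta> \<pi>0 K z w) = pmf (mX (fst z)) a * muF \<delta> \<pi>0 K z"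
    "(\<Sum>w\<in>snd -` {b}. GF \<delta> \<pi>0 K z w) = pmf (mY (snd z)) b * muF \<delta> \<pi>0 K z"
proof -
  have *: "\<And>c. (\<Sum>t. \<delta> * (1 - \<delta>) ^ t * pmf (coupled_law \<pi>0 K t) z * c) = muF \<delta> \<pi>0 K z * c"
    unfolding muF_def by (rule suminf_mult2[symmetric, OF summMu[OF assms(2,3)]])
  show "(\<Sum>w\<in>fst -` {a}. GF \<delta> \<pi>0 K z w) = pmf (mX (fst z)) a * muF \<delta> \<pi>0 K z"
    unfolding sumG[OF assms(2,3)] Kmarg[OF assms(1)] * by (rule mult.commute)
  show "(\<Sum>w\<in>snd -` {b}. GF \<delta> \<pi>0 K z w) = pmf (mY (snd z)) b * muF \<delta> \<pi>0 K z"
    unfolding sumG[OF assms(2,3)] Kmarg[OF assms(1)] * by (rule mult.commute)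
qed



context
  fixes mX :: "'x::finite \<Rightarrow> 'x pmf" and \<nu>X :: "'x pmf"
    and mY :: "'y::finite \<Rightarrow> 'y pmf" and \<nu>Y :: "'y pmf"
  assumes stX: "stationary mX \<nu>X" and stY: "stationary mY \<nu>Y"
begin

lemma limit_stationary:
  fixes \<delta> :: "nat \<Rightarrow> real" and \<pi> :: "nat \<Rightarrow> ('x \<times> 'y) pmf"
    and K :: "nat \<Rightarrow> nat \<Rightarrow> 'x \<times> 'y \<Rightarrow> ('x \<times> 'y) pmf" and C :: "'x \<Rightarrow> 'y \<Rightarrow> real"
  assumes dpos: "\<And>n. 0 < \<delta> n" and d1: "\<And>n. \<delta> n \<le> 1" and dlim: "\<delta> \<longlonglongrightarrow> 0"
    and mc: "\<And>n. (\<pi> n, K n) \<in> markov_couplings mX \<nu>X mY \<nu>Y"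
    and obj: "\<And>n. (\<Sum>z\<in>UNIV. muF (\<delta> n) (\<pi> n) (K n) z * C (fst z) (snd z)) \<le> c"
  shows "\<exists>\<pi>0 K'. \<pi>0 \<in> couplings \<nu>X \<nu>Y \<and> (\<forall>x y. K' (x, y) \<in> couplings (mX x) (mY y)) \<and>
           bind_pmf \<pi>0 K' = \<pi>0 \<and> exp_cost C \<pi>0 \<le> c"
proof -
  define V :: "nat \<Rightarrow> real ^ (('x \<times> 'y) \<times> ('x \<times> 'y))"
    where "V n = (\<chi> p. GF (\<delta> n) (\<pi> n) (K n) (fst p) (snd p))" for n
  have "bounded (range V)"
    unfolding bounded_iff
  proof (intro exI ballI)
    fix v assume "v \<in> range V"
    then obtain n where v: "v = V n" by auto
    have "norm v \<le> (\<Sum>i\<in>UNIV. \<bar>v $ i\<bar>)" by (rule norm_le_l1_cart)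
    also have "\<dots> \<le> (\<Sum>i\<in>(UNIV :: (('x \<times> 'y) \<times> ('x \<times> 'y)) set). 1)"
    proof (rule sum_mono)
      fix i :: "('x \<times> 'y) \<times> ('x \<times> 'y)"
      have "0 \<le> GF (\<delta> n) (\<pi> n) (K n) (fst i) (snd i)" "GF (\<delta> n) (\<pi> n) (K n) (fst i) (snd i) \<le> 1"
        by (rule G_bounds(1)[OF dpos d1], rule G_bounds(2)[OF dpos d1])
      then show "\<bar>v $ i\<bar> \<le> 1" unfolding v V_def by simp
    qed
    finally show "norm v \<le> real CARD(('x \<times> 'y) \<times> ('x \<times> 'y))" by simp
  qed
  then obtain l r where r: "strict_mono r" and lim: "(V \<circ> r) \<longlonglongrightarrow> l"
    using bounded_imp_convergent_subsequence by blast
  define Gn where "Gn n z w = GF (\<delta> (r n)) (\<pi> (r n)) (K (r n)) z w" for n z w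
  define mun where "mun n z = muF (\<delta> (r n)) (\<pi> (r n)) (K (r n)) z" for n z
  define Gl where "Gl z w = l $ (z, w)" for z w
  define mul where "mul z = (\<Sum>w\<in>UNIV. Gl z w)" for z
  have GL: "(\<lambda>n. Gn n z w) \<longlonglongrightarrow> Gl z w" for z w
    using tendsto_vec_nth[OF lim, of "(z, w)"] by (simp add: Gn_def Gl_def V_def o_def)
  have muL: "(\<lambda>n. mun n z) \<longlonglongrightarrow> mul z" for z
  proof -
    have "(\<lambda>n. \<Sum>w\<in>UNIV. Gn n z w) \<longlonglongrightarrow> mul z" unfolding mul_def by (intro tendsto_sum GL)
    moreover have "(\<lambda>n. \<Sum>w\<in>UNIV. Gn n z w) = (\<lambda>n. mun n z)"
      unfolding Gn_def mun_def by (rule ext, rule G_row[OF dpos d1])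
    ultimately show ?thesis by simp
  qed
  have Gnn: "0 \<le> Gl z w" for z w
    apply (rule LIMSEQ_le_const[OF GL[of z w]])
    unfolding Gn_def using G_bounds(1)[OF dpos d1] by blast
  have mnn: "0 \<le> mul z" for z unfolding mul_def using Gnn by (simp add: sum_nonneg)
  have Gfst: "(\<Sum>w\<in>fst -` {a}. Gl z w) = pmf (mX (fst z)) a * mul z" for z a
  proof -
    have "(\<lambda>n. \<Sum>w\<in>fst -` {a}. Gn n z w) \<longlonglongrightarrow> (\<Sum>w\<in>fst -` {a}. Gl z w)" by (intro tendsto_sum GL)
    moreover have "(\<lambda>n. \<Sum>w\<in>fst -` {a}. Gn n z w) = (\<lambda>n. pmf (mX (fst z)) a * mun n z)"
      unfolding Gn_def mun_def using G_marg(1)[OF mc dpos d1] by simp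
    moreover have "(\<lambda>n. pmf (mX (fst z)) a * mun n z) \<longlonglongrightarrow> pmf (mX (fst z)) a * mul z"
      by (intro tendsto_mult_left muL)
    ultimately show ?thesis using LIMSEQ_unique by metis
  qed
  have Gsnd: "(\<Sum>w\<in>snd -` {b}. Gl z w) = pmf (mY (snd z)) b * mul z" for z b
  proof -
    have "(\<lambda>n. \<Sum>w\<in>snd -` {b}. Gn n z w) \<longlonglongrightarrow> (\<Sum>w\<in>snd -` {b}. Gl z w)" by (intro tendsto_sum GL)
    moreover have "(\<lambda>n. \<Sum>w\<in>snd -` {b}. Gn n z w) = (\<lambda>n. pmf (mY (snd z)) b * mun n z)"
      unfolding Gn_def mun_def using G_marg(2)[OF mc dpos d1] by simp
    moreover have "(\<lambda>n. pmf (mY (snd z)) b * mun n z) \<longlonglongrightarrow> pmf (mY (snd z)) b * mul z"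
      by (intro tendsto_mult_left muL)
    ultimately show ?thesis using LIMSEQ_unique by metis
  qed
  have mfst: "(\<Sum>z\<in>fst -` {a}. mul z) = pmf \<nu>X a" for a
  proof -
    have "(\<lambda>n. \<Sum>z\<in>fst -` {a}. mun n z) \<longlonglongrightarrow> (\<Sum>z\<in>fst -` {a}. mul z)" by (intro tendsto_sum muL)
    moreover have "(\<lambda>n. \<Sum>z\<in>fst -` {a}. mun n z) = (\<lambda>n. pmf \<nu>X a)"
      unfolding mun_def using mu_marg(1)[OF stX stY mc dpos d1] by simp
    ultimately show ?thesis using LIMSEQ_unique tendsto_const by metis
  qed
  have msnd: "(\<Sum>z\<in>snd -` {b}. mul z) = pmf \<nu>Y b" for b
  proof -
    have "(\<lambda>n. \<Sum>z\<in>snd -` {b}. mun n z) \<longlonglongrightarrow> (\<Sum>z\<in>snd -` {b}. mul z)" by (intro tendsto_sum muL)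
    moreover have "(\<lambda>n. \<Sum>z\<in>snd -` {b}. mun n z) = (\<lambda>n. pmf \<nu>Y b)"
      unfolding mun_def using mu_marg(2)[OF stX stY mc dpos d1] by simp
    ultimately show ?thesis using LIMSEQ_unique tendsto_const by metis
  qed
  have mtot: "(\<Sum>z\<in>UNIV. mul z) = 1"
  proof -
    have "(\<lambda>n. \<Sum>z\<in>UNIV. mun n z) \<longlonglongrightarrow> (\<Sum>z\<in>UNIV. mul z)" by (intro tendsto_sum muL)
    moreover have "(\<lambda>n. \<Sum>z\<in>UNIV. mun n z) = (\<lambda>n. 1)"
      unfolding mun_def by (rule ext, rule mu_tot[OF dpos d1])
    ultimately show ?thesis using LIMSEQ_unique tendsto_const by metis
  qed
  have Gcol: "(\<Sum>z\<in>UNIV. Gl z w) = mul w" for w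
  proof -
    have "(\<lambda>n. \<bar>(\<Sum>z\<in>UNIV. Gn n z w) - mun n w\<bar>) \<longlonglongrightarrow> \<bar>(\<Sum>z\<in>UNIV. Gl z w) - mul w\<bar>"
      by (intro tendsto_intros GL muL)
    moreover have "(\<lambda>n. \<delta> (r n)) \<longlonglongrightarrow> 0"
      using LIMSEQ_subseq_LIMSEQ[OF dlim r] by (simp add: o_def)
    moreover have "\<forall>n. \<bar>(\<Sum>z\<in>UNIV. Gn n z w) - mun n w\<bar> \<le> \<delta> (r n)"
      unfolding Gn_def mun_def by (intro allI G_col[OF dpos d1])
    ultimately have "\<bar>(\<Sum>z\<in>UNIV. Gl z w) - mul w\<bar> \<le> 0"
      by (intro tendsto_le[OF trivial_limit_sequentially]) auto
    then show ?thesis by simp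
  qed
  have mobj: "(\<Sum>z\<in>UNIV. mul z * C (fst z) (snd z)) \<le> c"
  proof -
    have "(\<lambda>n. \<Sum>z\<in>UNIV. mun n z * C (fst z) (snd z)) \<longlonglongrightarrow> (\<Sum>z\<in>UNIV. mul z * C (fst z) (snd z))"
      by (intro tendsto_intros muL)
    then show ?thesis
      by (rule LIMSEQ_le_const2) (use obj in \<open>auto simp: mun_def\<close>)
  qed
  define \<pi>' where "\<pi>' = embed_pmf mul"
  have p\<pi>: "pmf \<pi>' z = mul z" for z unfolding \<pi>'_def by (rule pmf_embed_fin[OF mnn mtot])
  define K' where "K' z = (if 0 < mul z then embed_pmf (\<lambda>w. Gl z w / mul z)
       else pair_pmf (mX (fst z)) (mY (snd z)))" for z
  have pK: "pmf (K' z) w = Gl z w / mul z" if "0 < mul z" for z w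
  proof -
    have "(\<Sum>w\<in>UNIV. Gl z w / mul z) = 1"
      using that by (simp add: sum_divide_distrib[symmetric] mul_def)
    then show ?thesis unfolding K'_def using that
      by (simp add: pmf_embed_fin[of "\<lambda>w. Gl z w / mul z"] Gnn)
  qed
  have c\<pi>: "\<pi>' \<in> couplings \<nu>X \<nu>Y"
    unfolding couplings_def
    by (auto intro!: pmf_eqI simp: pmf_map_fin p\<pi> mfst msnd)
  have cK: "K' (x, y) \<in> couplings (mX x) (mY y)" for x y
  proof (cases "0 < mul (x, y)")
    case True
    have "map_pmf fst (K' (x, y)) = mX x"
    proof (rule pmf_eqI)
      fix a
      have "pmf (map_pmf fst (K' (x, y))) a = (\<Sum>w\<in>fst -` {a}. Gl (x, y) w) / mul (x, y)"
        by (simp add: pmf_map_fin pK[OF True] sum_divide_distrib)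
      then show "pmf (map_pmf fst (K' (x, y))) a = pmf (mX x) a" using True Gfst[of "(x, y)" a] by simp
    qed
    moreover have "map_pmf snd (K' (x, y)) = mY y"
    proof (rule pmf_eqI)
      fix b
      have "pmf (map_pmf snd (K' (x, y))) b = (\<Sum>w\<in>snd -` {b}. Gl (x, y) w) / mul (x, y)"
        by (simp add: pmf_map_fin pK[OF True] sum_divide_distrib)
      then show "pmf (map_pmf snd (K' (x, y))) b = pmf (mY y) b" using True Gsnd[of "(x, y)" b] by simp
    qed
    ultimately show ?thesis by (simp add: couplings_def)
  next
    case False
    then show ?thesis by (simp add: K'_def couplings_def map_fst_pair_pmf map_snd_pair_pmf)
  qed
  have each: "mul z * pmf (K' z) w = Gl z w" for z w
  proof (cases "0 < mul z")
    case True then show ?thesis by (simp add: pK)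
  next
    case False
    then have m0: "mul z = 0" using mnn[of z] by simp
    have "Gl z w \<le> mul z" unfolding mul_def by (rule member_le_sum) (auto simp: Gnn)
    then show ?thesis using m0 Gnn[of z w] by simp
  qed
  have st: "bind_pmf \<pi>' K' = \<pi>'"
  proof (rule pmf_eqI)
    fix w
    show "pmf (bind_pmf \<pi>' K') w = pmf \<pi>' w"
      by (simp add: pmf_bind expect_fin p\<pi> each Gcol)
  qed
  have "exp_cost C \<pi>' \<le> c" using mobj by (simp add: exp_cost_fin p\<pi>)
  then show ?thesis using c\<pi> cK st by blast
qed

end


lemma ec_bounds:
  fixes p :: "('x::finite \<times> 'y::finite) pmf" and C :: "'x \<Rightarrow> 'y \<Rightarrow> real"
  assumes "\<And>x y. C x y \<ge> 0"
  shows "0 \<le> exp_cost C p" "exp_cost C p \<le> (\<Sum>z\<in>UNIV. C (fst z) (snd z))"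
proof -
  show "0 \<le> exp_cost C p" unfolding exp_cost_fin using assms by (intro sum_nonneg) simp
  have "exp_cost C p \<le> (\<Sum>z\<in>UNIV. pmf p z * (\<Sum>z\<in>UNIV. C (fst z) (snd z)))"
    unfolding exp_cost_fin
    by (intro sum_mono mult_left_mono member_le_sum) (auto simp: assms)
  also have "\<dots> = (\<Sum>z\<in>UNIV. C (fst z) (snd z))"
    by (simp add: sum_distrib_right[symmetric] sum_pmf_eq_1)
  finally show "exp_cost C p \<le> (\<Sum>z\<in>UNIV. C (fst z) (snd z))" .
qed

lemma set_img: "{f a b | a b. (a, b) \<in> S} = (\<lambda>p. f (fst p) (snd p)) ` S"
  by force

lemma inf_close:
  fixes f g :: "'a \<Rightarrow> real"
  assumes "A \<noteq> {}" "\<And>p. p \<in> A \<Longrightarrow> 0 \<le> f p" "\<And>p. p \<in> A \<Longrightarrow> 0 \<le> g p"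
    "\<And>p. p \<in> A \<Longrightarrow> \<bar>f p - g p\<bar> \<le> e"
  shows "\<bar>Inf (f ` A) - Inf (g ` A)\<bar> \<le> e"
proof -
  have bf: "bdd_below (f ` A)" using assms(2) by (auto intro!: bdd_belowI[of _ 0])
  have bg: "bdd_below (g ` A)" using assms(3) by (auto intro!: bdd_belowI[of _ 0])
  have "Inf (f ` A) - e \<le> Inf (g ` A)"
  proof (rule cInf_greatest)
    fix x assume "x \<in> g ` A"
    then obtain p where p: "p \<in> A" "x = g p" by auto
    have "Inf (f ` A) \<le> f p" using p bf by (intro cInf_lower) auto
    then show "Inf (f ` A) - e \<le> x" using assms(4)[OF p(1)] p by (simp add: abs_le_iff)
  qed (use assms in auto)
  moreover have "Inf (g ` A) - e \<le> Inf (f ` A)"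
  proof (rule cInf_greatest)
    fix x assume "x \<in> f ` A"
    then obtain p where p: "p \<in> A" "x = f p" by auto
    have "Inf (g ` A) \<le> g p" using p bg by (intro cInf_lower) auto
    then show "Inf (g ` A) - e \<le> x" using assms(4)[OF p(1)] p by (simp add: abs_le_iff)
  qed (use assms in auto)
  ultimately show ?thesis by (simp add: abs_le_iff)
qed

lemma objK_close:
  fixes \<delta> :: real and e :: "nat \<Rightarrow> real"
  assumes d0: "0 < \<delta>" and d1: "\<delta> \<le> 1" and e0: "\<And>t. 0 \<le> e t" and eM: "\<And>t. e t \<le> M"
  shows "\<bar>((\<Sum>t<k. \<delta> * (1 - \<delta>) ^ t * e t) + (1 - \<delta>) ^ k * e k) - (\<Sum>t. \<delta> * (1 - \<delta>) ^ t * e t)\<bar>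
         \<le> (1 - \<delta>) ^ k * M"
proof -
  have s: "summable (\<lambda>t. \<delta> * (1 - \<delta>) ^ t * e t)" using wsum(1)[OF d0 d1 e0 eM] .
  have T: "0 \<le> (\<Sum>t. \<delta> * (1 - \<delta>) ^ t * e (t + k))" "(\<Sum>t. \<delta> * (1 - \<delta>) ^ t * e (t + k)) \<le> M"
    using wsum(2,3)[OF d0 d1, of "\<lambda>t. e (t + k)"] e0 eM by auto
  have sT: "summable (\<lambda>t. \<delta> * (1 - \<delta>) ^ t * e (t + k))"
    using wsum(1)[OF d0 d1, of "\<lambda>t. e (t + k)"] e0 eM by auto
  have "(\<Sum>t. \<delta> * (1 - \<delta>) ^ t * e t) = (\<Sum>t. \<delta> * (1 - \<delta>) ^ (t + k) * e (t + k)) + (\<Sum>t<k. \<delta> * (1 - \<delta>) ^ t * e t)"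
    by (rule suminf_split_initial_segment[OF s])
  also have "(\<Sum>t. \<delta> * (1 - \<delta>) ^ (t + k) * e (t + k)) = (1 - \<delta>) ^ k * (\<Sum>t. \<delta> * (1 - \<delta>) ^ t * e (t + k))"
    using suminf_mult[OF sT, of "(1 - \<delta>) ^ k"] by (simp add: power_add algebra_simps)
  finally have eq: "(\<Sum>t. \<delta> * (1 - \<delta>) ^ t * e t) = (1 - \<delta>) ^ k * (\<Sum>t. \<delta> * (1 - \<delta>) ^ t * e (t + k)) + (\<Sum>t<k. \<delta> * (1 - \<delta>) ^ t * e t)" .
  define T' where "T' = (\<Sum>t. \<delta> * (1 - \<delta>) ^ t * e (t + k))"
  have "((\<Sum>t<k. \<delta> * (1 - \<delta>) ^ t * e t) + (1 - \<delta>) ^ k * e k) - (\<Sum>t. \<delta> * (1 - \<delta>) ^ t * e t)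
        = (1 - \<delta>) ^ k * (e k - T')" unfolding eq T'_def by (simp add: algebra_simps)
  moreover have "\<bar>e k - T'\<bar> \<le> M" using T e0[of k] eM[of k] unfolding T'_def by (simp add: abs_le_iff)
  moreover have "0 \<le> (1 - \<delta>) ^ k" using d1 by simp
  ultimately show ?thesis by (simp add: abs_mult mult_left_mono)
qed



theorem theorem16:
  fixes mX :: "'x::finite \<Rightarrow> 'x pmf" and \<nu>X :: "'x pmf"
    and mY :: "'y::finite \<Rightarrow> 'y pmf" and \<nu>Y :: "'y pmf"
    and C :: "'x \<Rightarrow> 'y \<Rightarrow> real"
  assumes "stationary mX \<nu>X" and "stationary mY \<nu>Y"
    and "\<And>x y. C x y \<ge> 0"
  shows "((\<lambda>\<delta>. d_WL_inf \<delta> mX \<nu>X mY \<nu>Y C) \<longlongrightarrow> d_OTC mX \<nu>X mY \<nu>Y C) (at_right 0) \<and>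
    (\<forall>\<delta>\<in>{0<..1}. convergent (\<lambda>k. d_WL_k \<delta> k mX \<nu>X mY \<nu>Y C)) \<and>
    ((\<lambda>\<delta>. lim (\<lambda>k. d_WL_k \<delta> k mX \<nu>X mY \<nu>Y C)) \<longlongrightarrow> d_OTC mX \<nu>X mY \<nu>Y C) (at_right 0)"
proof -
  note stX = assms(1) and stY = assms(2) and Cnn = assms(3)
  define MC where "MC = markov_couplings mX \<nu>X mY \<nu>Y"
  define M where "M = (\<Sum>z\<in>(UNIV :: ('x \<times> 'y) set). C (fst z) (snd z))"
  define objI where "objI \<delta> p = (\<Sum>t. \<delta> * (1 - \<delta>) ^ t * exp_cost C (coupled_law (fst p) (snd p) t))"
    for \<delta> :: real and p :: "('x \<times> 'y) pmf \<times> (nat \<Rightarrow> 'x \<times> 'y \<Rightarrow> ('x \<times> 'y) pmf)"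
  define objK where "objK \<delta> k p = (\<Sum>t<k. \<delta> * (1 - \<delta>) ^ t * exp_cost C (coupled_law (fst p) (snd p) t))
            + (1 - \<delta>) ^ k * exp_cost C (coupled_law (fst p) (snd p) k)"
    for \<delta> :: real and k and p :: "('x \<times> 'y) pmf \<times> (nat \<Rightarrow> 'x \<times> 'y \<Rightarrow> ('x \<times> 'y) pmf)"
  define SO where "SO = {exp_cost C \<pi>0 | \<pi>0 K.
            \<pi>0 \<in> couplings \<nu>X \<nu>Y \<and>
            (\<forall>x y. K (x, y) \<in> couplings (mX x) (mY y)) \<and>
            bind_pmf \<pi>0 K = \<pi>0}"
  define dO where "dO = d_OTC mX \<nu>X mY \<nu>Y C"
  have dO: "dO = Inf SO" unfolding dO_def SO_def d_OTC_def ..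
  have dI: "d_WL_inf \<delta> mX \<nu>X mY \<nu>Y C = Inf (objI \<delta> ` MC)" for \<delta>
    unfolding d_WL_inf_def objI_def MC_def by (subst set_img) simp
  have dK: "d_WL_k \<delta> k mX \<nu>X mY \<nu>Y C = Inf (objK \<delta> k ` MC)" for \<delta> k
    unfolding d_WL_k_def objK_def MC_def by (subst set_img) simp
  have ecb: "0 \<le> exp_cost C p" "exp_cost C p \<le> M" for p :: "('x \<times> 'y) pmf"
    using ec_bounds[of C p] Cnn unfolding M_def by auto
  define prodc :: "('x \<times> 'y) pmf \<times> (nat \<Rightarrow> 'x \<times> 'y \<Rightarrow> ('x \<times> 'y) pmf)"
    where "prodc = (pair_pmf \<nu>X \<nu>Y, \<lambda>t z. pair_pmf (mX (fst z)) (mY (snd z)))"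
  have prodMC: "prodc \<in> MC"
    unfolding prodc_def MC_def markov_couplings_def couplings_def
    by (simp add: map_fst_pair_pmf map_snd_pair_pmf)
  have MCne: "MC \<noteq> {}" using prodMC by auto
  have objI_b: "0 \<le> objI \<delta> p" "objI \<delta> p \<le> M" if "0 < \<delta>" "\<delta> \<le> 1" for \<delta> p
    unfolding objI_def using wsum(2,3)[OF that, of "\<lambda>t. exp_cost C (coupled_law (fst p) (snd p) t)"] ecb
    by auto
  have objI_mu: "objI \<delta> p = (\<Sum>z\<in>UNIV. muF \<delta> (fst p) (snd p) z * C (fst z) (snd z))"
    if "0 < \<delta>" "\<delta> \<le> 1" for \<delta> p
    unfolding objI_def by (rule obj_eq[OF that])
  have limst: "\<exists>\<pi>0 K'. \<pi>0 \<in> couplings \<nu>X \<nu>Y \<and> (\<forall>x y. K' (x, y) \<in> couplings (mX x) (mY y)) \<and>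
           bind_pmf \<pi>0 K' = \<pi>0 \<and> exp_cost C \<pi>0 \<le> c"
    if "\<And>n. 0 < \<delta> n" "\<And>n. \<delta> n \<le> 1" "\<delta> \<longlonglongrightarrow> 0" "\<And>n. P n \<in> MC" "\<And>n. objI (\<delta> n) (P n) \<le> c"
    for \<delta> P c
  proof (rule limit_stationary[OF stX stY, of \<delta> "\<lambda>n. fst (P n)" "\<lambda>n. snd (P n)"])
    show "\<And>n. (fst (P n), snd (P n)) \<in> markov_couplings mX \<nu>X mY \<nu>Y" using that(4) by (simp add: MC_def)
    show "\<And>n. (\<Sum>z\<in>UNIV. muF (\<delta> n) (fst (P n)) (snd (P n)) z * C (fst z) (snd z)) \<le> c"
      using that(5) objI_mu[OF that(1,2)] by metis
  qed (use that in auto)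
  have SOne: "SO \<noteq> {}"
  proof -
    have ia: "\<And>n. 0 < inverse (real (Suc n))" by simp
    have ib: "\<And>n. inverse (real (Suc n)) \<le> 1" by (simp add: inverse_le_1_iff)
    have "\<exists>\<pi>0 K'. \<pi>0 \<in> couplings \<nu>X \<nu>Y \<and> (\<forall>x y. K' (x, y) \<in> couplings (mX x) (mY y)) \<and>
           bind_pmf \<pi>0 K' = \<pi>0 \<and> exp_cost C \<pi>0 \<le> M"
      by (rule limst[of "\<lambda>n. inverse (real (Suc n))" "\<lambda>n. prodc", OF ia ib LIMSEQ_inverse_real_of_nat
          prodMC objI_b(2)[OF ia ib]])
    then show ?thesis unfolding SO_def by blast
  qed
  have SOb: "bdd_below SO" unfolding SO_def using ecb by (auto intro!: bdd_belowI[of _ 0])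
  have upper: "d_WL_inf \<delta> mX \<nu>X mY \<nu>Y C \<le> dO" if "0 < \<delta>" "\<delta> \<le> 1" for \<delta>
    unfolding dI dO
  proof (rule cInf_superset_mono[OF SOne])
    show "bdd_below (objI \<delta> ` MC)" using objI_b[OF that] by (auto intro!: bdd_belowI[of _ 0])
    show "SO \<subseteq> objI \<delta> ` MC"
    proof
      fix v assume "v \<in> SO"
      then obtain \<pi>0 K where v: "v = exp_cost C \<pi>0" and c: "\<pi>0 \<in> couplings \<nu>X \<nu>Y"
        "\<forall>x y. K (x, y) \<in> couplings (mX x) (mY y)" "bind_pmf \<pi>0 K = \<pi>0"
        unfolding SO_def by blast
      have inMC: "(\<pi>0, \<lambda>t. K) \<in> MC" using c unfolding MC_def markov_couplings_def by auto
      have law: "coupled_law \<pi>0 (\<lambda>t. K) t = \<pi>0" for t by (induction t) (use c in auto)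
      have "objI \<delta> (\<pi>0, \<lambda>t. K) = v" unfolding objI_def by (simp only: fst_conv snd_conv law v wconst[OF that])
      then show "v \<in> objI \<delta> ` MC" using inMC by force
    qed
  qed
  have lower: "\<forall>\<^sub>F \<delta> in at_right 0. a < d_WL_inf \<delta> mX \<nu>X mY \<nu>Y C" if a: "a < dO" for a
  proof (rule ccontr)
    assume "\<not> ?thesis"
    then have "\<forall>b>0. \<exists>y>0. y < b \<and> \<not> a < d_WL_inf y mX \<nu>X mY \<nu>Y C"
      unfolding eventually_at_right_field by blast
    then have "\<forall>n. \<exists>y. 0 < y \<and> y < inverse (real (Suc n)) \<and> d_WL_inf y mX \<nu>X mY \<nu>Y C \<le> a"
      by (simp add: not_less)
    then have "\<exists>\<delta>. \<forall>n. 0 < \<delta> n \<and> \<delta> n < inverse (real (Suc n)) \<and> d_WL_inf (\<delta> n) mX \<nu>X mY \<nu>Y C \<le> a"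
      by (rule choice)
    then obtain \<delta> where d: "\<And>n. 0 < \<delta> n" "\<And>n. \<delta> n < inverse (real (Suc n))"
      "\<And>n. d_WL_inf (\<delta> n) mX \<nu>X mY \<nu>Y C \<le> a" by blast
    have d1: "\<delta> n \<le> 1" for n
    proof -
      have "inverse (real (Suc n)) \<le> 1" by (simp add: inverse_le_1_iff)
      then show ?thesis using d(2)[of n] by linarith
    qed
    have dl: "\<delta> \<longlonglongrightarrow> 0"
      by (rule tendsto_sandwich[OF _ _ tendsto_const LIMSEQ_inverse_real_of_nat])
        (use d in \<open>auto intro!: always_eventually less_imp_le\<close>)
    define e where "e = (dO - a) / 2"
    have e: "0 < e" using a by (simp add: e_def)
    have "\<forall>n. \<exists>p\<in>MC. objI (\<delta> n) p < a + e"
    proof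
      fix n
      have "Inf (objI (\<delta> n) ` MC) < a + e" using d(3)[of n] e by (simp add: dI)
      then obtain v where "v \<in> objI (\<delta> n) ` MC" "v < a + e"
        using cInf_lessD[of "objI (\<delta> n) ` MC"] MCne by blast
      then show "\<exists>p\<in>MC. objI (\<delta> n) p < a + e" by auto
    qed
    then have "\<exists>P. \<forall>n. P n \<in> MC \<and> objI (\<delta> n) (P n) < a + e" by (intro choice) blast
    then obtain P where P: "\<And>n. P n \<in> MC" "\<And>n. objI (\<delta> n) (P n) < a + e" by blast
    obtain \<pi>0 K' where "\<pi>0 \<in> couplings \<nu>X \<nu>Y" "\<forall>x y. K' (x, y) \<in> couplings (mX x) (mY y)"
           "bind_pmf \<pi>0 K' = \<pi>0" and ec: "exp_cost C \<pi>0 \<le> a + e"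
      using limst[of \<delta> P "a + e", OF d(1) d1 dl P(1) less_imp_le[OF P(2)]] by blast
    then have "exp_cost C \<pi>0 \<in> SO" unfolding SO_def by blast
    then have "dO \<le> exp_cost C \<pi>0" unfolding dO by (rule cInf_lower[OF _ SOb])
    moreover have "a + e < dO" using a unfolding e_def by (simp add: field_simps)
    ultimately show False using ec by (meson not_le order_trans)
  qed
  have part1: "((\<lambda>\<delta>. d_WL_inf \<delta> mX \<nu>X mY \<nu>Y C) \<longlongrightarrow> dO) (at_right 0)"
  proof (rule order_tendstoI)
    fix a assume "a < dO" then show "\<forall>\<^sub>F \<delta> in at_right 0. a < d_WL_inf \<delta> mX \<nu>X mY \<nu>Y C" by (rule lower)
  next
    fix a assume a: "dO < a"
    show "\<forall>\<^sub>F \<delta> in at_right 0. d_WL_inf \<delta> mX \<nu>X mY \<nu>Y C < a"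
      unfolding eventually_at_right_field
    proof (intro exI[of _ 1] conjI allI impI)
      fix y :: real assume "0 < y" "y < 1"
      then have "d_WL_inf y mX \<nu>X mY \<nu>Y C \<le> dO" by (intro upper) auto
      then show "d_WL_inf y mX \<nu>X mY \<nu>Y C < a" using a by (rule le_less_trans)
    qed simp
  qed
  have klim: "(\<lambda>k. d_WL_k \<delta> k mX \<nu>X mY \<nu>Y C) \<longlonglongrightarrow> d_WL_inf \<delta> mX \<nu>X mY \<nu>Y C"
    if d0: "0 < \<delta>" and d1: "\<delta> \<le> 1" for \<delta>
  proof -
    have objK_nn: "0 \<le> objK \<delta> k p" for k p
      unfolding objK_def using d0 d1 ecb by (intro add_nonneg_nonneg sum_nonneg mult_nonneg_nonneg) auto
    have cl: "\<bar>d_WL_k \<delta> k mX \<nu>X mY \<nu>Y C - d_WL_inf \<delta> mX \<nu>X mY \<nu>Y C\<bar> \<le> (1 - \<delta>) ^ k * M" for k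
      unfolding dK dI
    proof (rule inf_close[OF MCne])
      fix p
      show "\<bar>objK \<delta> k p - objI \<delta> p\<bar> \<le> (1 - \<delta>) ^ k * M"
        unfolding objK_def objI_def
        by (rule objK_close[OF d0 d1, of "\<lambda>t. exp_cost C (coupled_law (fst p) (snd p) t)"]) (rule ecb)+
    qed (use objK_nn objI_b[OF d0 d1] in blast)+
    have "(\<lambda>k. (1 - \<delta>) ^ k * M) \<longlonglongrightarrow> 0 * M"
      by (intro tendsto_mult_right LIMSEQ_power_zero) (use d0 d1 in auto)
    then have g0: "(\<lambda>k. (1 - \<delta>) ^ k * M) \<longlonglongrightarrow> 0" by simp
    have nb: "\<forall>k. norm (d_WL_k \<delta> k mX \<nu>X mY \<nu>Y C - d_WL_inf \<delta> mX \<nu>X mY \<nu>Y C) \<le> (1 - \<delta>) ^ k * M"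
      using cl by simp
    have "(\<lambda>k. d_WL_k \<delta> k mX \<nu>X mY \<nu>Y C - d_WL_inf \<delta> mX \<nu>X mY \<nu>Y C) \<longlonglongrightarrow> 0"
      using Lim_null_comparison[OF always_eventually[OF nb] g0] .
    then have "(\<lambda>k. (d_WL_k \<delta> k mX \<nu>X mY \<nu>Y C - d_WL_inf \<delta> mX \<nu>X mY \<nu>Y C) + d_WL_inf \<delta> mX \<nu>X mY \<nu>Y C)
        \<longlonglongrightarrow> 0 + d_WL_inf \<delta> mX \<nu>X mY \<nu>Y C"
      by (intro tendsto_add tendsto_const)
    then show ?thesis by simp
  qed
  have part2: "\<forall>\<delta>\<in>{0<..1}. convergent (\<lambda>k. d_WL_k \<delta> k mX \<nu>X mY \<nu>Y C)"
  proof
    fix \<delta> :: real assume "\<delta> \<in> {0<..1}"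
    then have "(\<lambda>k. d_WL_k \<delta> k mX \<nu>X mY \<nu>Y C) \<longlonglongrightarrow> d_WL_inf \<delta> mX \<nu>X mY \<nu>Y C"
      by (intro klim) auto
    then show "convergent (\<lambda>k. d_WL_k \<delta> k mX \<nu>X mY \<nu>Y C)" unfolding convergent_def by blast
  qed
  have part3: "((\<lambda>\<delta>. lim (\<lambda>k. d_WL_k \<delta> k mX \<nu>X mY \<nu>Y C)) \<longlongrightarrow> dO) (at_right 0)"
  proof -
    have "\<forall>\<^sub>F \<delta> in at_right 0. d_WL_inf \<delta> mX \<nu>X mY \<nu>Y C = lim (\<lambda>k. d_WL_k \<delta> k mX \<nu>X mY \<nu>Y C)"
      unfolding eventually_at_right_field
    proof (intro exI[of _ 1] conjI allI impI)
      fix y :: real assume "0 < y" "y < 1"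
      then have "(\<lambda>k. d_WL_k y k mX \<nu>X mY \<nu>Y C) \<longlonglongrightarrow> d_WL_inf y mX \<nu>X mY \<nu>Y C"
        by (intro klim) auto
      then show "d_WL_inf y mX \<nu>X mY \<nu>Y C = lim (\<lambda>k. d_WL_k y k mX \<nu>X mY \<nu>Y C)"
        by (rule limI[symmetric])
    qed simp
    from tendsto_cong[OF this] part1 show ?thesis by simp
  qed
  show ?thesis using part1 part2 part3 unfolding dO_def by blast
qed

end
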